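(* Let $G$ be a finitely generated group and $\mu$ a finitely supported symmetric non-degenerate probability measure on $G$. Let $h:G\to\mathbb{R}$ be a $\mu$-harmonic function of subexponential growth. Then for every element $\gamma$ of finite order in the FC-center $Z^{FC}(G)$ and every $x\in G$, one has $h(\gamma x)=h(x)$.
   Context: Non-degenerate means the support of $\mu$ generates $G$ as a semigroup. The FC-center $Z^{FC}(G)$ is the subgroup of elements with finite conjugacy class. $h$ is $\mu$-harmonic if $h(x)=\sum_g h(xg)\mu(g)$ for all $x$. With $M_h(n)=\max\{|h(x)|:d(e,x)\le n\}$ for a word metric $d$, $h$ has subexponential growth if $e^{-cn}M_h(n)\to0$ as $n\to\infty$ for every $c>0$. *)

theory Defs
  imports "HOL-Algebra.Algebra" "HOL-Analysis.Analysis"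
begin

definition list_prod :: "('a, 'b) monoid_scheme \<Rightarrow> 'a list \<Rightarrow> 'a" where
  "list_prod G l = foldr (\<lambda>a b. a \<otimes>\<^bsub>G\<^esub> b) l \<one>\<^bsub>G\<^esub>"

definition word_length :: "('a, 'b) monoid_scheme \<Rightarrow> 'a set \<Rightarrow> 'a \<Rightarrow> nat" where
  "word_length G S x = (LEAST n. \<exists>l. length l = n \<and>
      set l \<subseteq> S \<union> (\<lambda>s. inv\<^bsub>G\<^esub> s) ` S \<and> list_prod G l = x)"

definition max_on_ball :: "('a, 'b) monoid_scheme \<Rightarrow> 'a set \<Rightarrow> ('a \<Rightarrow> real) \<Rightarrow> nat \<Rightarrow> real" where
  "max_on_ball G S h n = Max ((\<lambda>x. \<bar>h x\<bar>) ` {x \<in> carrier G. word_length G S x \<le> n})"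

definition subexp_growth :: "('a, 'b) monoid_scheme \<Rightarrow> 'a set \<Rightarrow> ('a \<Rightarrow> real) \<Rightarrow> bool" where
  "subexp_growth G S h \<longleftrightarrow>
     (\<forall>c::real. c > 0 \<longrightarrow> (\<lambda>n. exp (- c * real n) * max_on_ball G S h n) \<longlonglongrightarrow> 0)"

definition support :: "('a, 'b) monoid_scheme \<Rightarrow> ('a \<Rightarrow> real) \<Rightarrow> 'a set" where
  "support G \<mu> = {g \<in> carrier G. \<mu> g \<noteq> 0}"

inductive_set semigroup_generated :: "('a, 'b) monoid_scheme \<Rightarrow> 'a set \<Rightarrow> 'a set"
  for G A where
  base: "a \<in> A \<Longrightarrow> a \<in> semigroup_generated G A"
| mult: "a \<in> semigroup_generated G A \<Longrightarrow> b \<in> semigroup_generated G A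
          \<Longrightarrow> a \<otimes>\<^bsub>G\<^esub> b \<in> semigroup_generated G A"

definition good_measure :: "('a, 'b) monoid_scheme \<Rightarrow> ('a \<Rightarrow> real) \<Rightarrow> bool" where
  "good_measure G \<mu> \<longleftrightarrow>
     (\<forall>g \<in> carrier G. \<mu> g \<ge> 0) \<and>
     finite (support G \<mu>) \<and>
     (\<Sum>g \<in> support G \<mu>. \<mu> g) = 1 \<and>
     (\<forall>g \<in> carrier G. \<mu> (inv\<^bsub>G\<^esub> g) = \<mu> g) \<and>
     semigroup_generated G (support G \<mu>) = carrier G"

definition harmonic :: "('a, 'b) monoid_scheme \<Rightarrow> ('a \<Rightarrow> real) \<Rightarrow> ('a \<Rightarrow> real) \<Rightarrow> bool" where
  "harmonic G \<mu> h \<longleftrightarrow>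
     (\<forall>x \<in> carrier G. h x = (\<Sum>g \<in> support G \<mu>. h (x \<otimes>\<^bsub>G\<^esub> g) * \<mu> g))"

definition FC_center :: "('a, 'b) monoid_scheme \<Rightarrow> 'a set" where
  "FC_center G = {g \<in> carrier G.
      finite {x \<otimes>\<^bsub>G\<^esub> g \<otimes>\<^bsub>G\<^esub> inv\<^bsub>G\<^esub> x | x. x \<in> carrier G}}"

definition finite_order :: "('a, 'b) monoid_scheme \<Rightarrow> 'a \<Rightarrow> bool" where
  "finite_order G g \<longleftrightarrow> (\<exists>n::nat. n > 0 \<and> g [^]\<^bsub>G\<^esub> n = \<one>\<^bsub>G\<^esub>)"

end

theory Submission
  imports Defs
begin

lemma decomp:
  fixes q v :: "'i \<Rightarrow> real" and b :: "nat \<Rightarrow> 'i"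
  assumes fin: "finite I" and qnn: "\<forall>i\<in>I. q i \<ge> 0" and qs: "(\<Sum>i\<in>I. q i) = 1"
    and bI: "\<forall>j<n. b j \<in> I" and n: "n > 0" and eps: "0 < \<epsilon>"
    and qe: "\<forall>j<n. \<epsilon> \<le> q (b j)" and vz: "(\<Sum>j<n. v (b j)) = 0"
    and vB: "\<forall>i\<in>I. \<bar>v i\<bar> \<le> B"
  shows "\<bar>\<Sum>i\<in>I. q i * v i\<bar> \<le> (1 - \<epsilon>) * B"
proof -
  define cnt where "cnt i = real (card {j. j \<in> {..<n} \<and> b j = i})" for i
  have g1: "(\<Sum>i\<in>I. (\<Sum>j\<in>{j. j \<in> {..<n} \<and> b j = i}. v (b j))) = (\<Sum>j<n. v (b j))"
    by (rule sum.group) (use fin bI in auto)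
  have g2: "(\<Sum>i\<in>I. (\<Sum>j\<in>{j. j \<in> {..<n} \<and> b j = i}. (1::real))) = (\<Sum>j<n. 1)"
    by (rule sum.group) (use fin bI in auto)
  have cv: "(\<Sum>j\<in>{j. j \<in> {..<n} \<and> b j = i}. v (b j)) = cnt i * v i" for i
  proof -
    have "(\<Sum>j\<in>{j. j \<in> {..<n} \<and> b j = i}. v (b j)) = (\<Sum>j\<in>{j. j \<in> {..<n} \<and> b j = i}. v i)"
      by (rule sum.cong) auto
    then show ?thesis by (simp add: cnt_def)
  qed
  have c1: "(\<Sum>j\<in>{j. j \<in> {..<n} \<and> b j = i}. (1::real)) = cnt i" for i
    by (simp add: cnt_def)
  have sumcv: "(\<Sum>i\<in>I. cnt i * v i) = 0"
  proof -
    have "(\<Sum>i\<in>I. cnt i * v i) = (\<Sum>i\<in>I. (\<Sum>j\<in>{j. j \<in> {..<n} \<and> b j = i}. v (b j)))"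
      by (rule sum.cong) (simp_all only: cv)
    then show ?thesis using g1 vz by simp
  qed
  have sumc: "(\<Sum>i\<in>I. cnt i) = real n"
  proof -
    have "(\<Sum>i\<in>I. cnt i) = (\<Sum>i\<in>I. (\<Sum>j\<in>{j. j \<in> {..<n} \<and> b j = i}. (1::real)))"
      by (rule sum.cong) (simp_all only: c1)
    then show ?thesis using g2 by simp
  qed
  define c where "c i = q i - \<epsilon> * cnt i / real n" for i
  have cnn: "c i \<ge> 0" if "i \<in> I" for i
  proof (cases "cnt i = 0")
    case True then show ?thesis using qnn that by (simp add: c_def)
  next
    case False
    then have "{j. j \<in> {..<n} \<and> b j = i} \<noteq> {}" by (auto simp: cnt_def)
    then obtain j where j: "j < n" "b j = i" by auto
    have "card {j. j \<in> {..<n} \<and> b j = i} \<le> card {..<n}" by (rule card_mono) auto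
    then have "cnt i \<le> real n" by (simp add: cnt_def)
    then have "\<epsilon> * cnt i / real n \<le> \<epsilon>" using eps n by (simp add: field_simps)
    moreover have "\<epsilon> \<le> q i" using qe j by auto
    ultimately show ?thesis by (simp add: c_def)
  qed
  have eq: "(\<Sum>i\<in>I. q i * v i) = (\<Sum>i\<in>I. c i * v i)"
  proof -
    have "(\<Sum>i\<in>I. c i * v i) = (\<Sum>i\<in>I. q i * v i) - \<epsilon> / real n * (\<Sum>i\<in>I. cnt i * v i)"
      by (simp add: c_def algebra_simps sum_subtractf sum_distrib_left)
    then show ?thesis using sumcv by simp
  qed
  have sc: "(\<Sum>i\<in>I. c i) = 1 - \<epsilon>"
  proof -
    have "(\<Sum>i\<in>I. c i) = (\<Sum>i\<in>I. q i) - \<epsilon> / real n * (\<Sum>i\<in>I. cnt i)"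
      by (simp add: c_def sum_subtractf sum_distrib_left)
    then show ?thesis using sumc qs n by simp
  qed
  have "\<bar>\<Sum>i\<in>I. c i * v i\<bar> \<le> (\<Sum>i\<in>I. \<bar>c i * v i\<bar>)" by (rule sum_abs)
  also have "\<dots> \<le> (\<Sum>i\<in>I. c i * B)"
    by (rule sum_mono) (use cnn vB in \<open>auto simp: abs_mult intro: mult_left_mono\<close>)
  also have "\<dots> = (1 - \<epsilon>) * B" using sc by (simp add: sum_distrib_right[symmetric])
  finally show ?thesis using eq by simp
qed

context group
begin

lemma lp_Nil[simp]: "list_prod G [] = \<one>" by (simp add: list_prod_def)
lemma lp_Cons[simp]: "list_prod G (a # l) = a \<otimes> list_prod G l" by (simp add: list_prod_def)

lemma lp_closed: "set l \<subseteq> carrier G \<Longrightarrow> list_prod G l \<in> carrier G"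
  by (induction l) auto

lemma lp_append: "set l1 \<subseteq> carrier G \<Longrightarrow> set l2 \<subseteq> carrier G \<Longrightarrow>
   list_prod G (l1 @ l2) = list_prod G l1 \<otimes> list_prod G l2"
  by (induction l1) (auto simp: m_assoc lp_closed)

lemma lp_rep_one: "set l \<subseteq> carrier G \<Longrightarrow> list_prod G (l @ replicate k \<one>) = list_prod G l"
proof -
  assume l: "set l \<subseteq> carrier G"
  have "list_prod G (replicate k \<one>) = \<one>" by (induction k) auto
  moreover have "set (replicate k \<one>) \<subseteq> carrier G" by auto
  ultimately show ?thesis using l by (simp add: lp_append lp_closed)
qed

lemma gen_word:
  assumes "S \<subseteq> carrier G" "x \<in> generate G S"
  shows "\<exists>l. set l \<subseteq> S \<union> (\<lambda>s. inv s) ` S \<and> list_prod G l = x"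
  using assms(2)
proof (induction rule: generate.induct)
  case one then show ?case by (intro exI[of _ "[]"]) auto
next
  case (incl h) then show ?case using assms(1) by (intro exI[of _ "[h]"]) auto
next
  case (inv h) then show ?case using assms(1) by (intro exI[of _ "[inv h]"]) auto
next
  case (eng h1 h2)
  then obtain l1 l2 where "set l1 \<subseteq> S \<union> (\<lambda>s. inv s) ` S" "list_prod G l1 = h1"
     "set l2 \<subseteq> S \<union> (\<lambda>s. inv s) ` S" "list_prod G l2 = h2" by blast
  moreover have "S \<union> (\<lambda>s. inv s) ` S \<subseteq> carrier G" using assms(1) by auto
  ultimately show ?case
    by (intro exI[of _ "l1 @ l2"]) (metis (no_types, lifting) le_sup_iff lp_append order_trans set_append)
qed

lemma wl_le:
  assumes "set l \<subseteq> S \<union> (\<lambda>s. inv s) ` S" "list_prod G l = x"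
  shows "word_length G S x \<le> length l"
  unfolding word_length_def by (rule Least_le) (use assms in auto)

lemma wl_witness:
  assumes "S \<subseteq> carrier G" "generate G S = carrier G" "x \<in> carrier G"
  shows "\<exists>l. length l = word_length G S x \<and> set l \<subseteq> S \<union> (\<lambda>s. inv s) ` S \<and> list_prod G l = x"
proof -
  obtain l where "set l \<subseteq> S \<union> (\<lambda>s. inv s) ` S \<and> list_prod G l = x" using gen_word assms by blast
  then have "\<exists>n l. length l = n \<and> set l \<subseteq> S \<union> (\<lambda>s. inv s) ` S \<and> list_prod G l = x" by blast
  then show ?thesis unfolding word_length_def by (rule LeastI_ex)
qed

lemma wl_mult:
  assumes "S \<subseteq> carrier G" "generate G S = carrier G" "x \<in> carrier G" "y \<in> carrier G"
  shows "word_length G S (x \<otimes> y) \<le> word_length G S x + word_length G S y"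
proof -
  obtain l1 where l1: "length l1 = word_length G S x" "set l1 \<subseteq> S \<union> (\<lambda>s. inv s) ` S" "list_prod G l1 = x"
    using wl_witness assms by blast
  obtain l2 where l2: "length l2 = word_length G S y" "set l2 \<subseteq> S \<union> (\<lambda>s. inv s) ` S" "list_prod G l2 = y"
    using wl_witness assms by blast
  have sc: "S \<union> (\<lambda>s. inv s) ` S \<subseteq> carrier G" using assms(1) by auto
  have c1: "set l1 \<subseteq> carrier G" "set l2 \<subseteq> carrier G" using l1 l2 sc by auto
  have "list_prod G (l1 @ l2) = x \<otimes> y" using l1 l2 by (simp add: lp_append[OF c1])
  then have "word_length G S (x \<otimes> y) \<le> length (l1 @ l2)" by (rule wl_le[rotated]) (use l1 l2 in auto)
  then show ?thesis using l1 l2 by simp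
qed

lemma ball_finite:
  assumes "finite S" "S \<subseteq> carrier G" "generate G S = carrier G"
  shows "finite {x \<in> carrier G. word_length G S x \<le> n}"
proof -
  have "{x \<in> carrier G. word_length G S x \<le> n} \<subseteq> list_prod G ` {l. set l \<subseteq> S \<union> (\<lambda>s. inv s) ` S \<and> length l \<le> n}"
  proof
    fix x assume x: "x \<in> {x \<in> carrier G. word_length G S x \<le> n}"
    then obtain l where "length l = word_length G S x" "set l \<subseteq> S \<union> (\<lambda>s. inv s) ` S" "list_prod G l = x"
      using wl_witness assms by blast
    then show "x \<in> list_prod G ` {l. set l \<subseteq> S \<union> (\<lambda>s. inv s) ` S \<and> length l \<le> n}" using x by force
  qed
  moreover have "finite {l. set l \<subseteq> S \<union> (\<lambda>s. inv s) ` S \<and> length l \<le> n}"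
    by (rule finite_lists_length_le) (use assms in auto)
  ultimately show ?thesis by (meson finite_imageI finite_subset)
qed

lemma h_le_mob:
  assumes "finite S" "S \<subseteq> carrier G" "generate G S = carrier G" "z \<in> carrier G" "word_length G S z \<le> n"
  shows "\<bar>h z\<bar> \<le> max_on_ball G S h n"
  unfolding max_on_ball_def by (rule Max_ge) (use ball_finite[OF assms(1-3)] assms(4,5) in auto)

end

lemma lists_Suc:
  "{l. set l \<subseteq> T \<and> length l = Suc k} = (\<lambda>(g,l). g # l) ` (T \<times> {l. set l \<subseteq> T \<and> length l = k})"
  by (auto simp: length_Suc_conv image_iff)

lemma sum_lists_Suc:
  fixes F :: "'a list \<Rightarrow> real"
  shows "(\<Sum>l\<in>{l. set l \<subseteq> T \<and> length l = Suc k}. F l) =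
         (\<Sum>g\<in>T. \<Sum>l\<in>{l. set l \<subseteq> T \<and> length l = k}. F (g # l))"
proof -
  have inj: "inj_on (\<lambda>(g,l). g # l) (T \<times> {l. set l \<subseteq> T \<and> length l = k})"
    by (auto simp: inj_on_def)
  show ?thesis unfolding lists_Suc sum.reindex[OF inj] sum.cartesian_product
    by (simp add: case_prod_beta)
qed

context group
begin

lemma rep_power:
  fixes m :: "'a \<Rightarrow> real" and h :: "'a \<Rightarrow> real"
  assumes fT: "finite T" and TG: "T \<subseteq> carrier G"
    and hT: "\<forall>y\<in>carrier G. h y = (\<Sum>g\<in>T. m g * h (y \<otimes> g))"
    and ms: "(\<Sum>g\<in>T. m g) = 1"
  shows "(\<forall>y\<in>carrier G. h y = (\<Sum>l\<in>{l. set l \<subseteq> T \<and> length l = k}.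
             prod_list (map m l) * h (y \<otimes> list_prod G l))) \<and>
         (\<Sum>l\<in>{l. set l \<subseteq> T \<and> length l = k}. prod_list (map m l)) = 1"
proof (induction k)
  case 0
  have e: "{l. set l \<subseteq> T \<and> length l = 0} = {[]}" by auto
  show ?case unfolding e by simp
next
  case (Suc k)
  define Lk where "Lk = {l. set l \<subseteq> T \<and> length l = k}"
  have IH1: "\<forall>y\<in>carrier G. h y = (\<Sum>l\<in>Lk. prod_list (map m l) * h (y \<otimes> list_prod G l))"
    and IH2: "(\<Sum>l\<in>Lk. prod_list (map m l)) = 1" using Suc.IH by (auto simp: Lk_def)
  have A: "h y = (\<Sum>l\<in>{l. set l \<subseteq> T \<and> length l = Suc k}. prod_list (map m l) * h (y \<otimes> list_prod G l))"
    if y: "y \<in> carrier G" for y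
  proof -
    have "h y = (\<Sum>g\<in>T. m g * h (y \<otimes> g))" using hT y by auto
    also have "\<dots> = (\<Sum>g\<in>T. m g * (\<Sum>l\<in>Lk. prod_list (map m l) * h ((y \<otimes> g) \<otimes> list_prod G l)))"
      by (rule sum.cong) (use IH1 y TG in auto)
    also have "\<dots> = (\<Sum>g\<in>T. \<Sum>l\<in>Lk. prod_list (map m (g # l)) * h (y \<otimes> list_prod G (g # l)))"
    proof (rule sum.cong[OF refl])
      fix g assume g: "g \<in> T"
      have "m g * (\<Sum>l\<in>Lk. prod_list (map m l) * h ((y \<otimes> g) \<otimes> list_prod G l))
          = (\<Sum>l\<in>Lk. m g * (prod_list (map m l) * h ((y \<otimes> g) \<otimes> list_prod G l)))"
        by (simp add: sum_distrib_left)
      also have "\<dots> = (\<Sum>l\<in>Lk. prod_list (map m (g # l)) * h (y \<otimes> list_prod G (g # l)))"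
      proof (rule sum.cong[OF refl])
        fix l assume l: "l \<in> Lk"
        then have "set l \<subseteq> carrier G" using TG by (auto simp: Lk_def)
        then have "(y \<otimes> g) \<otimes> list_prod G l = y \<otimes> list_prod G (g # l)"
          using g TG y by (simp add: m_assoc lp_closed subset_iff)
        then show "m g * (prod_list (map m l) * h ((y \<otimes> g) \<otimes> list_prod G l)) =
                   prod_list (map m (g # l)) * h (y \<otimes> list_prod G (g # l))" by simp
      qed
      finally show "m g * (\<Sum>l\<in>Lk. prod_list (map m l) * h ((y \<otimes> g) \<otimes> list_prod G l)) =
                    (\<Sum>l\<in>Lk. prod_list (map m (g # l)) * h (y \<otimes> list_prod G (g # l)))" .
    qed
    also have "\<dots> = (\<Sum>l\<in>{l. set l \<subseteq> T \<and> length l = Suc k}. prod_list (map m l) * h (y \<otimes> list_prod G l))"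
      unfolding Lk_def by (rule sum_lists_Suc[symmetric])
    finally show ?thesis .
  qed
  have B: "(\<Sum>l\<in>{l. set l \<subseteq> T \<and> length l = Suc k}. prod_list (map m l)) = 1"
  proof -
    have "(\<Sum>l\<in>{l. set l \<subseteq> T \<and> length l = Suc k}. prod_list (map m l)) =
          (\<Sum>g\<in>T. \<Sum>l\<in>Lk. prod_list (map m (g # l)))"
      unfolding Lk_def by (rule sum_lists_Suc)
    also have "\<dots> = (\<Sum>g\<in>T. m g * (\<Sum>l\<in>Lk. prod_list (map m l)))"
      by (simp add: sum_distrib_left)
    also have "\<dots> = 1" using IH2 ms by simp
    finally show ?thesis .
  qed
  show ?case using A B by blast
qed

lemma sg_word:
  assumes "A \<subseteq> carrier G" "x \<in> semigroup_generated G A"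
  shows "\<exists>l. set l \<subseteq> A \<and> list_prod G l = x"
  using assms(2)
proof (induction rule: semigroup_generated.induct)
  case (base a) then show ?case using assms(1) by (intro exI[of _ "[a]"]) auto
next
  case (mult a b)
  then obtain l1 l2 where l: "set l1 \<subseteq> A" "list_prod G l1 = a" "set l2 \<subseteq> A" "list_prod G l2 = b" by blast
  then have c: "set l1 \<subseteq> carrier G" "set l2 \<subseteq> carrier G" using assms(1) by auto
  show ?case using l by (intro exI[of _ "l1 @ l2"]) (simp add: lp_append[OF c])
qed

lemma cancel_yinv [simp]: "y \<in> carrier G \<Longrightarrow> z \<in> carrier G \<Longrightarrow> y \<otimes> (inv y \<otimes> z) = z"
  by (simp add: m_assoc[symmetric])

lemma conj_pow:
  assumes y: "y \<in> carrier G" and g: "g \<in> carrier G"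
  shows "(inv y \<otimes> g \<otimes> y) [^] (k::nat) = inv y \<otimes> (g [^] k) \<otimes> y"
proof (induction k)
  case 0 then show ?case using y by simp
next
  case (Suc k)
  have "(inv y \<otimes> g \<otimes> y) [^] Suc k = (inv y \<otimes> (g [^] k) \<otimes> y) \<otimes> (inv y \<otimes> g \<otimes> y)"
    using Suc by simp
  also have "\<dots> = inv y \<otimes> (g [^] k \<otimes> (y \<otimes> inv y) \<otimes> g) \<otimes> y"
    using y g by (simp add: m_assoc)
  also have "\<dots> = inv y \<otimes> (g [^] Suc k) \<otimes> y" using y g by simp
  finally show ?case .
qed

end

theorem proposition3p3:
  fixes G :: "('a, 'b) monoid_scheme" and S :: "'a set"
    and \<mu> :: "'a \<Rightarrow> real" and h :: "'a \<Rightarrow> real"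
  assumes "group G"
    and "finite S" and "S \<subseteq> carrier G" and "generate G S = carrier G"
    and "good_measure G \<mu>"
    and "harmonic G \<mu> h"
    and "subexp_growth G S h"
  shows "\<forall>\<gamma> \<in> FC_center G. finite_order G \<gamma> \<longrightarrow>
           (\<forall>x \<in> carrier G. h (\<gamma> \<otimes>\<^bsub>G\<^esub> x) = h x)"
proof (intro ballI impI)
  fix \<gamma> x assume \<gamma>: "\<gamma> \<in> FC_center G" and fo: "finite_order G \<gamma>" and x: "x \<in> carrier G"
  interpret group G by (rule assms(1))
  have mu_nn: "\<forall>g\<in>carrier G. \<mu> g \<ge> 0" and fP: "finite (support G \<mu>)"
    and msum: "(\<Sum>g \<in> support G \<mu>. \<mu> g) = 1"
    and sgen: "semigroup_generated G (support G \<mu>) = carrier G"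
    using assms(5) unfolding good_measure_def by auto
  define P where "P = support G \<mu>"
  have PG: "P \<subseteq> carrier G" by (auto simp: P_def support_def)
  have Ppos: "\<forall>g\<in>P. \<mu> g > 0" using mu_nn by (force simp: P_def support_def)
  have harm: "\<forall>y\<in>carrier G. h y = (\<Sum>g\<in>P. h (y \<otimes>\<^bsub>G\<^esub> g) * \<mu> g)"
    using assms(6) unfolding harmonic_def P_def by auto
  define T where "T = insert \<one>\<^bsub>G\<^esub> P"
  define m where "m g = (if g = \<one>\<^bsub>G\<^esub> then 1/2 else 0) + \<mu> g / 2" for g
  have fT: "finite T" using fP by (simp add: T_def P_def)
  have TG: "T \<subseteq> carrier G" using PG by (simp add: T_def)
  have sumT: "(\<Sum>g\<in>T. \<mu> g * f g) = (\<Sum>g\<in>P. \<mu> g * f g)" for f :: "'a \<Rightarrow> real"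
  proof (cases "\<one>\<^bsub>G\<^esub> \<in> P")
    case True then show ?thesis by (simp add: T_def insert_absorb)
  next
    case False
    then have "\<mu> \<one>\<^bsub>G\<^esub> = 0" by (simp add: P_def support_def)
    then show ?thesis using False fP by (simp add: T_def P_def)
  qed
  have hT: "\<forall>y\<in>carrier G. h y = (\<Sum>g\<in>T. m g * h (y \<otimes>\<^bsub>G\<^esub> g))"
  proof
    fix y assume y: "y \<in> carrier G"
    have e: "m g * h (y \<otimes>\<^bsub>G\<^esub> g) = (if g = \<one>\<^bsub>G\<^esub> then h (y \<otimes>\<^bsub>G\<^esub> g) / 2 else 0)
              + \<mu> g * h (y \<otimes>\<^bsub>G\<^esub> g) / 2" for g
      by (simp add: m_def algebra_simps)
    have "(\<Sum>g\<in>T. m g * h (y \<otimes>\<^bsub>G\<^esub> g)) = (\<Sum>g\<in>T. (if g = \<one>\<^bsub>G\<^esub> then h (y \<otimes>\<^bsub>G\<^esub> g) / 2 else 0))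
        + (\<Sum>g\<in>T. \<mu> g * h (y \<otimes>\<^bsub>G\<^esub> g)) / 2"
      by (simp only: e sum.distrib sum_divide_distrib)
    also have "\<dots> = h y / 2 + (\<Sum>g\<in>P. \<mu> g * h (y \<otimes>\<^bsub>G\<^esub> g)) / 2"
      using fT y sumT[of "\<lambda>g. h (y \<otimes>\<^bsub>G\<^esub> g)"] by (simp add: T_def)
    also have "(\<Sum>g\<in>P. \<mu> g * h (y \<otimes>\<^bsub>G\<^esub> g)) = h y"
      using harm y by (simp add: mult.commute)
    finally show "h y = (\<Sum>g\<in>T. m g * h (y \<otimes>\<^bsub>G\<^esub> g))" by simp
  qed
  have ms: "(\<Sum>g\<in>T. m g) = 1"
  proof -
    have e: "m g = (if g = \<one>\<^bsub>G\<^esub> then 1 / 2 else 0) + \<mu> g * 1 / 2" for g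
      by (simp add: m_def)
    have "(\<Sum>g\<in>T. m g) = (\<Sum>g\<in>T. (if g = \<one>\<^bsub>G\<^esub> then 1 / 2 else 0)) + (\<Sum>g\<in>T. \<mu> g * 1) / 2"
      by (simp only: e sum.distrib sum_divide_distrib)
    also have "\<dots> = 1/2 + (\<Sum>g\<in>P. \<mu> g * 1) / 2"
      using fT by (simp only: sumT) (simp add: T_def)
    finally show ?thesis using msum by (simp add: P_def)
  qed
  have mpos: "\<forall>g\<in>T. m g > 0"
  proof
    fix g assume g: "g \<in> T"
    show "m g > 0"
    proof (cases "g = \<one>\<^bsub>G\<^esub>")
      case True
      then have "\<mu> g \<ge> 0" using mu_nn by simp
      then show ?thesis using True by (simp add: m_def)
    next
      case False
      then have "g \<in> P" using g by (simp add: T_def)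
      then show ?thesis using Ppos False by (simp add: m_def)
    qed
  qed
  obtain n :: nat where n: "n > 0" "\<gamma> [^]\<^bsub>G\<^esub> n = \<one>\<^bsub>G\<^esub>" using fo unfolding finite_order_def by blast
  have \<gamma>G: "\<gamma> \<in> carrier G" using \<gamma> by (simp add: FC_center_def)
  define D where "D = {inv\<^bsub>G\<^esub> y \<otimes>\<^bsub>G\<^esub> \<gamma> \<otimes>\<^bsub>G\<^esub> y | y. y \<in> carrier G}"
  have "D \<subseteq> {z \<otimes>\<^bsub>G\<^esub> \<gamma> \<otimes>\<^bsub>G\<^esub> inv\<^bsub>G\<^esub> z | z. z \<in> carrier G}"
  proof
    fix d assume "d \<in> D"
    then obtain y where y: "y \<in> carrier G" "d = inv\<^bsub>G\<^esub> y \<otimes>\<^bsub>G\<^esub> \<gamma> \<otimes>\<^bsub>G\<^esub> y" by (auto simp: D_def)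
    then have "d = inv\<^bsub>G\<^esub> y \<otimes>\<^bsub>G\<^esub> \<gamma> \<otimes>\<^bsub>G\<^esub> inv\<^bsub>G\<^esub> (inv\<^bsub>G\<^esub> y)" by simp
    then show "d \<in> {z \<otimes>\<^bsub>G\<^esub> \<gamma> \<otimes>\<^bsub>G\<^esub> inv\<^bsub>G\<^esub> z | z. z \<in> carrier G}" using y by blast
  qed
  then have finD: "finite D" using \<gamma> by (auto simp: FC_center_def intro: finite_subset)
  have DG: "D \<subseteq> carrier G" using \<gamma>G by (auto simp: D_def)
  define F where "F = (\<lambda>(d, j). d [^]\<^bsub>G\<^esub> (j::nat)) ` (D \<times> {..<n})"
  have finF: "finite F" using finD by (simp add: F_def)
  have FG: "F \<subseteq> carrier G" using DG by (auto simp: F_def)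
  have \<gamma>D: "\<gamma> \<in> D" using \<gamma>G unfolding D_def by (intro CollectI exI[of _ "\<one>\<^bsub>G\<^esub>"]) simp
  have oneF: "\<gamma> [^]\<^bsub>G\<^esub> (0::nat) \<in> F" using \<gamma>D n unfolding F_def by force
  have "\<forall>f\<in>F. \<exists>l. set l \<subseteq> P \<and> list_prod G l = f"
    using sg_word[OF PG] sgen FG by (auto simp: P_def)
  then obtain lf where lf: "\<forall>f\<in>F. set (lf f) \<subseteq> P \<and> list_prod G (lf f) = f" by metis
  define L where "L = Max ((\<lambda>f. length (lf f)) ` F)"
  define pad where "pad f = lf f @ replicate (L - length (lf f)) \<one>\<^bsub>G\<^esub>" for f
  have pad: "set (pad f) \<subseteq> T \<and> length (pad f) = L \<and> list_prod G (pad f) = f" if f: "f \<in> F" for f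
  proof -
    have "length (lf f) \<le> L" unfolding L_def using finF f by (auto intro: Max_ge)
    moreover have "set (lf f) \<subseteq> carrier G" using lf f PG by auto
    ultimately show ?thesis using lf f lp_rep_one by (auto simp: pad_def T_def)
  qed
  define I where "I = {l. set l \<subseteq> T \<and> length l = L}"
  define q where "q l = prod_list (map m l)" for l
  have finI: "finite I" unfolding I_def using fT by (rule finite_lists_length_eq)
  have rp: "(\<forall>y\<in>carrier G. h y = (\<Sum>l\<in>I. q l * h (y \<otimes>\<^bsub>G\<^esub> list_prod G l))) \<and> (\<Sum>l\<in>I. q l) = 1"
    unfolding I_def q_def by (rule rep_power[OF fT TG hT ms])
  then have rep: "\<forall>y\<in>carrier G. h y = (\<Sum>l\<in>I. q l * h (y \<otimes>\<^bsub>G\<^esub> list_prod G l))"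
    and qs: "(\<Sum>l\<in>I. q l) = 1" by auto
  have qpos0: "set l \<subseteq> T \<longrightarrow> prod_list (map m l) > 0" for l
    by (induction l) (use mpos in auto)
  have qpos: "\<forall>l\<in>I. q l > 0" using qpos0 by (auto simp: I_def q_def)
  have lpG: "\<forall>l\<in>I. list_prod G l \<in> carrier G" using TG by (auto simp: I_def intro: lp_closed)
  have padI: "pad f \<in> I" if "f \<in> F" for f using pad[OF that] by (simp add: I_def)
  have qle1: "q l \<le> 1" if "l \<in> I" for l
  proof -
    have "q l \<le> (\<Sum>l\<in>I. q l)" by (rule member_le_sum) (use that finI qpos in \<open>auto intro: less_imp_le\<close>)
    then show ?thesis using qs by simp
  qed
  define \<epsilon> where "\<epsilon> = Min (q ` pad ` F) / 2"
  have fQ: "finite (q ` pad ` F)" "q ` pad ` F \<noteq> {}" using finF oneF by auto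
  have eps_le: "\<epsilon> \<le> q (pad f)" if "f \<in> F" for f
  proof -
    have "Min (q ` pad ` F) \<le> q (pad f)" using fQ that by (auto intro: Min_le)
    moreover have "q (pad f) > 0" using qpos padI that by auto
    ultimately show ?thesis by (simp add: \<epsilon>_def)
  qed
  have eps_pos: "\<epsilon> > 0"
  proof -
    have "0 < Min (q ` pad ` F)" using fQ qpos padI by (auto simp: Min_gr_iff)
    then show ?thesis by (simp add: \<epsilon>_def)
  qed
  have eps_half: "\<epsilon> \<le> 1/2"
  proof -
    have "Min (q ` pad ` F) \<le> q (pad (\<gamma> [^]\<^bsub>G\<^esub> (0::nat)))" using fQ oneF by (auto intro: Min_le)
    also have "\<dots> \<le> 1" using qle1 padI oneF by blast
    finally show ?thesis by (simp add: \<epsilon>_def)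
  qed
  define K where "K = Max ((\<lambda>l. word_length G S (list_prod G l)) ` I) + 1"
  have K1: "K \<ge> 1" by (simp add: K_def)
  have KI: "word_length G S (list_prod G l) \<le> K" if "l \<in> I" for l
  proof -
    have "word_length G S (list_prod G l) \<le> Max ((\<lambda>l. word_length G S (list_prod G l)) ` I)"
      using finI that by (auto intro: Max_ge)
    then show ?thesis by (simp add: K_def)
  qed
  define u where "u y = h (\<gamma> \<otimes>\<^bsub>G\<^esub> y) - h y" for y
  have step: "\<bar>u y\<bar> \<le> (1 - \<epsilon>) * B"
    if y: "y \<in> carrier G" and yB: "\<forall>l\<in>I. \<bar>u (y \<otimes>\<^bsub>G\<^esub> list_prod G l)\<bar> \<le> B" for y B
  proof -
    define c where "c = inv\<^bsub>G\<^esub> y \<otimes>\<^bsub>G\<^esub> \<gamma> \<otimes>\<^bsub>G\<^esub> y"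
    have cG: "c \<in> carrier G" using y \<gamma>G by (simp add: c_def)
    have cD: "c \<in> D" using y unfolding D_def c_def by blast
    have cF: "c [^]\<^bsub>G\<^esub> j \<in> F" if "j < n" for j :: nat using cD that unfolding F_def by force
    have cn: "c [^]\<^bsub>G\<^esub> n = \<one>\<^bsub>G\<^esub>" using conj_pow[OF y \<gamma>G, of n] n y by (simp add: c_def)
    have yc: "\<gamma> \<otimes>\<^bsub>G\<^esub> (y \<otimes>\<^bsub>G\<^esub> z) = y \<otimes>\<^bsub>G\<^esub> (c \<otimes>\<^bsub>G\<^esub> z)" if z: "z \<in> carrier G" for z
      using y z \<gamma>G by (simp add: c_def m_assoc)
    define b where "b j = pad (c [^]\<^bsub>G\<^esub> j)" for j :: nat
    have uy: "u y = (\<Sum>l\<in>I. q l * u (y \<otimes>\<^bsub>G\<^esub> list_prod G l))"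
    proof -
      have "h (\<gamma> \<otimes>\<^bsub>G\<^esub> y) = (\<Sum>l\<in>I. q l * h (\<gamma> \<otimes>\<^bsub>G\<^esub> y \<otimes>\<^bsub>G\<^esub> list_prod G l))"
        using rep y \<gamma>G by simp
      also have "\<dots> = (\<Sum>l\<in>I. q l * h (\<gamma> \<otimes>\<^bsub>G\<^esub> (y \<otimes>\<^bsub>G\<^esub> list_prod G l)))"
        by (rule sum.cong) (use lpG y \<gamma>G in \<open>auto simp: m_assoc\<close>)
      finally have "u y = (\<Sum>l\<in>I. q l * h (\<gamma> \<otimes>\<^bsub>G\<^esub> (y \<otimes>\<^bsub>G\<^esub> list_prod G l)))
           - (\<Sum>l\<in>I. q l * h (y \<otimes>\<^bsub>G\<^esub> list_prod G l))"
        using rep y by (simp add: u_def)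
      then show ?thesis by (simp add: u_def sum_subtractf right_diff_distrib)
    qed
    have vz: "(\<Sum>j<n. u (y \<otimes>\<^bsub>G\<^esub> list_prod G (b j))) = 0"
    proof -
      have "(\<Sum>j<n. u (y \<otimes>\<^bsub>G\<^esub> list_prod G (b j))) =
            (\<Sum>j<n. h (y \<otimes>\<^bsub>G\<^esub> c [^]\<^bsub>G\<^esub> Suc j) - h (y \<otimes>\<^bsub>G\<^esub> c [^]\<^bsub>G\<^esub> j))"
      proof (rule sum.cong[OF refl])
        fix j assume "j \<in> {..<n}"
        then have "list_prod G (b j) = c [^]\<^bsub>G\<^esub> j" using pad cF by (simp add: b_def)
        moreover have "\<gamma> \<otimes>\<^bsub>G\<^esub> (y \<otimes>\<^bsub>G\<^esub> c [^]\<^bsub>G\<^esub> j) = y \<otimes>\<^bsub>G\<^esub> c [^]\<^bsub>G\<^esub> Suc j"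
          using yc[of "c [^]\<^bsub>G\<^esub> j"] cG nat_pow_Suc2[OF cG, of j] by (simp del: nat_pow_Suc)
        ultimately show "u (y \<otimes>\<^bsub>G\<^esub> list_prod G (b j)) =
             h (y \<otimes>\<^bsub>G\<^esub> c [^]\<^bsub>G\<^esub> Suc j) - h (y \<otimes>\<^bsub>G\<^esub> c [^]\<^bsub>G\<^esub> j)" by (simp add: u_def)
      qed
      also have "\<dots> = h (y \<otimes>\<^bsub>G\<^esub> c [^]\<^bsub>G\<^esub> n) - h (y \<otimes>\<^bsub>G\<^esub> c [^]\<^bsub>G\<^esub> (0::nat))"
        by (rule sum_lessThan_telescope)
      also have "\<dots> = 0" using cn y by simp
      finally show ?thesis .
    qed
    have "\<bar>\<Sum>l\<in>I. q l * u (y \<otimes>\<^bsub>G\<^esub> list_prod G l)\<bar> \<le> (1 - \<epsilon>) * B"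
      by (rule decomp[where b = b and n = n])
         (use finI qpos qs n eps_pos vz yB padI cF eps_le in \<open>auto simp: b_def less_imp_le\<close>)
    then show ?thesis using uy by simp
  qed
  define wl where "wl = word_length G S"
  define mob where "mob = max_on_ball G S h"
  have bnd: "\<bar>u z\<bar> \<le> 2 * mob (r + wl \<gamma>)" if z: "z \<in> carrier G" "wl z \<le> r" for z r
  proof -
    have "wl (\<gamma> \<otimes>\<^bsub>G\<^esub> z) \<le> r + wl \<gamma>"
      using wl_mult[OF assms(3,4) \<gamma>G z(1)] z(2) by (simp add: wl_def)
    then have "\<bar>h (\<gamma> \<otimes>\<^bsub>G\<^esub> z)\<bar> \<le> mob (r + wl \<gamma>)"
      using h_le_mob[OF assms(2,3,4)] z \<gamma>G by (simp add: wl_def mob_def)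
    moreover have "\<bar>h z\<bar> \<le> mob (r + wl \<gamma>)"
      using h_le_mob[OF assms(2,3,4)] z by (simp add: wl_def mob_def)
    ultimately show ?thesis by (simp add: u_def)
  qed
  have iter: "\<forall>y r. y \<in> carrier G \<longrightarrow> wl y \<le> r \<longrightarrow>
      \<bar>u y\<bar> \<le> (1 - \<epsilon>) ^ k * (2 * mob (r + k * K + wl \<gamma>))" for k
  proof (induction k)
    case 0 then show ?case using bnd by simp
  next
    case (Suc k)
    show ?case
    proof (intro allI impI)
      fix y r assume y: "y \<in> carrier G" and r: "wl y \<le> r"
      have "\<forall>l\<in>I. \<bar>u (y \<otimes>\<^bsub>G\<^esub> list_prod G l)\<bar> \<le> (1 - \<epsilon>) ^ k * (2 * mob ((r + K) + k * K + wl \<gamma>))"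
      proof
        fix l assume l: "l \<in> I"
        have "wl (y \<otimes>\<^bsub>G\<^esub> list_prod G l) \<le> r + K"
          using wl_mult[OF assms(3,4) y, of "list_prod G l"] lpG l KI[OF l] r by (simp add: wl_def)
        then show "\<bar>u (y \<otimes>\<^bsub>G\<^esub> list_prod G l)\<bar> \<le> (1 - \<epsilon>) ^ k * (2 * mob ((r + K) + k * K + wl \<gamma>))"
          using Suc.IH y lpG l by blast
      qed
      then have "\<bar>u y\<bar> \<le> (1 - \<epsilon>) * ((1 - \<epsilon>) ^ k * (2 * mob ((r + K) + k * K + wl \<gamma>)))"
        using step y by blast
      moreover have "(r + K) + k * K + wl \<gamma> = r + Suc k * K + wl \<gamma>" by simp
      ultimately show "\<bar>u y\<bar> \<le> (1 - \<epsilon>) ^ Suc k * (2 * mob (r + Suc k * K + wl \<gamma>))"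
        by (simp add: mult.assoc)
    qed
  qed
  define a where "a = wl x + wl \<gamma>"
  define N where "N k = a + k * K" for k
  define \<delta> where "\<delta> = - ln (1 - \<epsilon>)"
  define c where "c = \<delta> / real K"
  have dpos: "\<delta> > 0" using eps_pos eps_half by (simp add: \<delta>_def)
  have cpos: "c > 0" using dpos K1 by (simp add: c_def)
  have lim0: "(\<lambda>k. exp (- c * real k) * mob k) \<longlonglongrightarrow> 0"
    using assms(7) cpos unfolding subexp_growth_def mob_def by blast
  have smN: "strict_mono N" using K1 by (auto simp: strict_mono_def N_def)
  have lim1: "(\<lambda>k. exp (- c * real (N k)) * mob (N k)) \<longlonglongrightarrow> 0"
    using LIMSEQ_subseq_LIMSEQ[OF lim0 smN] by (simp add: comp_def)
  have eqk: "(1 - \<epsilon>) ^ k * (2 * mob (N k)) = 2 * exp (c * a) * (exp (- c * real (N k)) * mob (N k))" for k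
  proof -
    have "(1 - \<epsilon>) ^ k = exp (- \<delta>) ^ k" using eps_half by (simp add: \<delta>_def)
    also have "\<dots> = exp (real k * (- \<delta>))" by (rule exp_of_nat_mult[symmetric])
    also have "\<dots> = exp (c * a) * exp (- c * real (N k))"
    proof -
      have "c * real a + - c * real (N k) = real k * (- \<delta>)"
        using K1 by (simp add: N_def c_def field_simps)
      then show ?thesis by (simp add: exp_add[symmetric])
    qed
    finally show ?thesis by (simp add: algebra_simps)
  qed
  have lim2: "(\<lambda>k. (1 - \<epsilon>) ^ k * (2 * mob (N k))) \<longlonglongrightarrow> 0"
    unfolding eqk by (rule tendsto_mult_right_zero[OF lim1])
  have "\<forall>k. \<bar>u x\<bar> \<le> (1 - \<epsilon>) ^ k * (2 * mob (N k))"
  proof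
    fix k
    have "\<bar>u x\<bar> \<le> (1 - \<epsilon>) ^ k * (2 * mob (wl x + k * K + wl \<gamma>))" using iter x by blast
    moreover have "wl x + k * K + wl \<gamma> = N k" by (simp add: N_def a_def)
    ultimately show "\<bar>u x\<bar> \<le> (1 - \<epsilon>) ^ k * (2 * mob (N k))" by simp
  qed
  then have "\<bar>u x\<bar> \<le> 0" by (intro LIMSEQ_le_const[OF lim2]) auto
  then show "h (\<gamma> \<otimes>\<^bsub>G\<^esub> x) = h x" by (simp add: u_def)
qed

end
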